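(* Let $X_1,\dots,X_n$ be i.i.d. $\mathrm{ECR}(\beta,\lambda)$, let $X_{i:n}$ ($1\le i\le n$) be the $i$-th order statistic, and let $r\in(-2i\beta,1)$. Then $$\mathbb E(X_{i:n}^r)=\frac{\beta(\lambda\sqrt2)^r}{B(i,n-i+1)}\sum_{j=0}^{n-i}(-1)^j\binom{n-i}{j}B\!\left(1-r,\tfrac r2+(i+j)\beta\right){}_2F_1\!\left(-\tfrac r2,\tfrac r2+(i+j)\beta;\,1-\tfrac r2+(i+j)\beta;\,\tfrac12\right).$$
   Context: The exponentiated Cauchy–Rayleigh distribution $\mathrm{ECR}(\beta,\lambda)$, with shape parameter $\beta>0$ and scale parameter $\lambda>0$, is the distribution on $(0,\infty)$ with cdf $F(x)=\left(1-\frac{\lambda}{\sqrt{\lambda^2+x^2}}\right)^{\beta}$ for $x>0$. $B(\cdot,\cdot)$ is the beta function and ${}_2F_1(a,b;c;z)=\sum_{k\ge0}\frac{(a)_k(b)_k}{(c)_k}\frac{z^k}{k!}$ the Gauss hypergeometric function. *)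

theory Defs
  imports "HOL-Probability.Probability"
begin

definition ecr_cdf :: "real \<Rightarrow> real \<Rightarrow> real \<Rightarrow> real" where
  "ecr_cdf \<beta> lam x = (if x \<le> 0 then 0 else (1 - lam / sqrt (lam\<^sup>2 + x\<^sup>2)) powr \<beta>)"

definition hyp2F1 :: "real \<Rightarrow> real \<Rightarrow> real \<Rightarrow> real \<Rightarrow> real" where
  "hyp2F1 a b c z = (\<Sum>k. pochhammer a k * pochhammer b k / pochhammer c k * z ^ k / fact k)"

definition order_stat :: "nat \<Rightarrow> nat \<Rightarrow> (nat \<Rightarrow> real) \<Rightarrow> real" where
  "order_stat n i x = sort (map x [1..<n+1]) ! (i - 1)"

end

theory Submission
  imports Defs
begin


lemma beta_lborel:
  fixes a b :: real assumes a: "a > 0" and b: "b > 0"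
  shows "integrable lborel (\<lambda>v. indicator {0<..<1} v * (v powr (b-1) * (1-v) powr (a-1)))"
    "(\<integral>v. indicator {0<..<1} v * (v powr (b-1) * (1-v) powr (a-1)) \<partial>lborel) = Beta b a"
proof -
  let ?g = "\<lambda>v::real. indicator {0<..<1} v * (v powr (b-1) * (1-v) powr (a-1))"
  have h: "((\<lambda>t. t powr (b - 1) * (1 - t) powr (a - 1)) has_integral Beta b a) {0<..<1}"
    using has_integral_Beta_real[OF b a] by (simp add: has_integral_Icc_iff_Ioo)
  have h2: "(?g has_integral Beta b a) UNIV"
  proof -
    have "((\<lambda>x. if x \<in> {0<..<1} then x powr (b - 1) * (1 - x) powr (a - 1) else 0) has_integral Beta b a) UNIV"
      using h by (simp only: has_integral_restrict_UNIV)
    moreover have "(\<lambda>x. if x \<in> {0<..<1} then x powr (b - 1) * (1 - x) powr (a - 1) else 0) = ?g"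
      by (auto simp: indicator_def fun_eq_iff)
    ultimately show ?thesis by simp
  qed
  have meas: "?g \<in> borel_measurable borel" by measurable
  have nn: "\<And>x. 0 \<le> ?g x" by (auto simp: indicator_def)
  have "integral\<^sup>N lborel ?g = Beta b a"
    by (rule nn_integral_has_integral_lborel[OF meas nn h2])
  moreover have "Beta b a \<ge> 0"
    using a b by (simp add: Beta_def)
  ultimately have "integrable lborel ?g \<and> integral\<^sup>L lborel ?g = Beta b a"
    using nn_integral_eq_integrable[of ?g lborel "Beta b a"] meas nn by auto
  then show "integrable lborel ?g" "integral\<^sup>L lborel ?g = Beta b a" by auto
qed

lemma binom_abs_summable: "summable (\<lambda>k. \<bar>(s::real) gchoose k\<bar> * (1/2)^k)"
proof (rule summable_ratio_test[where c="3/4" and N="nat \<lceil>2*\<bar>s\<bar>\<rceil>"])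
  fix k assume k: "nat \<lceil>2*\<bar>s\<bar>\<rceil> \<le> k"
  then have k2: "2*\<bar>s\<bar> \<le> real k" by linarith
  have rec: "(s gchoose Suc k) = (s - real k) * (s gchoose k) / (real k + 1)"
    using gbinomial_mult_1[of s k] by (simp add: field_simps)
  have "\<bar>s - real k\<bar> \<le> \<bar>s\<bar> + \<bar>real k\<bar>" by (rule abs_triangle_ineq4)
  then have "\<bar>s - real k\<bar> \<le> 3/2 * (real k + 1)" using k2 by simp
  then have "\<bar>s - real k\<bar> / (real k + 1) \<le> 3/2" by (simp add: divide_le_eq)
  then have "\<bar>s - real k\<bar> / (real k + 1) * (\<bar>s gchoose k\<bar> * (1/2)^k) \<le> 3/2 * (\<bar>s gchoose k\<bar> * (1/2)^k)"
    by (intro mult_right_mono) auto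
  then show "norm (\<bar>s gchoose Suc k\<bar> * (1/2)^Suc k) \<le> 3/4 * norm (\<bar>s gchoose k\<bar> * (1/2)^k)"
  proof -
    have "norm (\<bar>s gchoose Suc k\<bar> * (1/2)^Suc k) = \<bar>s - real k\<bar> / (real k + 1) * (\<bar>s gchoose k\<bar> * (1/2)^k) / 2"
      by (simp add: rec abs_mult abs_divide)
    moreover have "norm (\<bar>s gchoose k\<bar> * (1/2::real)^k) = \<bar>s gchoose k\<bar> * (1/2)^k" by simp
    moreover have aux: "\<And>x y z::real. x = y/2 \<Longrightarrow> y \<le> 3/2*z \<Longrightarrow> x \<le> 3/4*z" by linarith
    ultimately show ?thesis using aux \<open>\<bar>s - real k\<bar> / (real k + 1) * (\<bar>s gchoose k\<bar> * (1/2)^k) \<le> 3/2 * (\<bar>s gchoose k\<bar> * (1/2)^k)\<close>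
      by metis
  qed
qed simp

lemma not_nonpos_Int_pos: "(x::real) > 0 \<Longrightarrow> x \<notin> \<int>\<^sub>\<le>\<^sub>0"
  by (auto elim!: nonpos_Ints_cases)

lemma Beta_shift:
  fixes a b :: real assumes a: "a > 0" and b: "b > 0"
  shows "Beta (b + real k) a = Beta b a * pochhammer b k / pochhammer (a+b) k"
proof -
  have g1: "Gamma (b + real k) = pochhammer b k * Gamma b"
    using pochhammer_Gamma[OF not_nonpos_Int_pos[OF b], of k] Gamma_real_pos[OF b] by simp
  have gab: "Gamma (a+b) > 0" using a b by (intro Gamma_real_pos) simp
  have "pochhammer (a+b) k = Gamma (a + b + real k) / Gamma (a+b)"
    by (rule pochhammer_Gamma) (use not_nonpos_Int_pos[of "a+b"] a b in simp)
  then have g2: "Gamma (a + b + real k) = pochhammer (a+b) k * Gamma (a+b)"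
    using gab by simp
  have p: "pochhammer (a+b) k > 0" using a b by (intro pochhammer_pos) simp
  have "Gamma (a+b) > 0" using a b by (intro Gamma_real_pos) simp
  then have gba: "Gamma (b+a) > 0" by (simp add: add.commute)
  have g2': "Gamma (b + real k + a) = pochhammer (a+b) k * Gamma (b+a)"
    using g2 by (simp add: add_ac)
  show ?thesis using p gba unfolding Beta_def g1 g2'
    by (simp add: field_simps)
qed

lemma euler:
  fixes a b s :: real assumes a: "a > 0" and b: "b > 0"
  shows "integrable lborel (\<lambda>v. indicator {0<..<1} v * (v powr (b-1) * (1-v) powr (a-1) * (1 - v/2) powr s))"
    "(\<integral>v. indicator {0<..<1} v * (v powr (b-1) * (1-v) powr (a-1) * (1 - v/2) powr s) \<partial>lborel)
       = Beta b a * hyp2F1 (-s) b (a+b) (1/2)"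
proof -
  define F where "F = (\<lambda>v::real. indicator {0<..<1} v * (v powr (b-1) * (1-v) powr (a-1) * (1 - v/2) powr s))"
  define g where "g = (\<lambda>(k::nat) (v::real). indicator {0<..<1} v * (v powr (b + real k - 1) * (1-v) powr (a-1)))"
  define c where "c = (\<lambda>k::nat. (s gchoose k) * (-1/2)^k)"
  define f where "f = (\<lambda>k v. c k * g k v)"
  have gint: "integrable lborel (g k)" "integral\<^sup>L lborel (g k) = Beta (b + real k) a" for k
    using beta_lborel[of a "b + real k"] a b unfolding g_def by auto
  have gnn: "g k v \<ge> 0" for k v unfolding g_def by (auto simp: indicator_def)
  have fint: "integrable lborel (f k)" for k unfolding f_def using gint by auto
  have fI: "integral\<^sup>L lborel (f k) = c k * Beta (b + real k) a" for k
    unfolding f_def using gint by simp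
  have nf: "norm (f k v) = \<bar>s gchoose k\<bar> * (1/2)^k * g k v" for k v
    using gnn[of k v] by (simp add: f_def c_def abs_mult power_abs)
  have nI: "(\<integral>v. norm (f k v) \<partial>lborel) = \<bar>s gchoose k\<bar> * (1/2)^k * Beta (b + real k) a" for k
    unfolding nf using gint by simp
  have Bmono: "Beta (b + real k) a \<le> Beta b a" for k
    using Beta_real_mono[of b "b + real k" a a] a b by simp
  have sum1: "summable (\<lambda>k. \<integral>v. norm (f k v) \<partial>lborel)"
  proof (rule summable_comparison_test'[where g="\<lambda>k. \<bar>s gchoose k\<bar> * (1/2)^k * Beta b a"])
    show "summable (\<lambda>k. \<bar>s gchoose k\<bar> * (1/2)^k * Beta b a)"
      by (intro summable_mult2 binom_abs_summable)
    fix k show "norm (\<integral>v. norm (f k v) \<partial>lborel) \<le> \<bar>s gchoose k\<bar> * (1/2)^k * Beta b a"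
    proof -
      have Bnn: "0 \<le> Beta (b + real k) a" using a b by (simp add: Beta_def Gamma_real_pos)
      show ?thesis unfolding nI using Bmono[of k] Bnn by (simp add: abs_mult mult_left_mono)
    qed
  qed
  have pw: "(\<lambda>k. f k v) sums F v" for v
  proof (cases "v \<in> {0<..<1}")
    case True
    then have v: "0 < v" "v < 1" by auto
    have "(\<lambda>k. (s gchoose k) * (-v/2)^k) sums (1 + (-v/2)) powr s"
      by (rule gen_binomial_real) (use v in auto)
    then have "(\<lambda>k. v powr (b-1) * (1-v) powr (a-1) * ((s gchoose k) * (-v/2)^k)) sums
        (v powr (b-1) * (1-v) powr (a-1) * (1 + (-v/2)) powr s)"
      by (rule sums_mult)
    moreover have "v powr (b-1) * (1-v) powr (a-1) * ((s gchoose k) * (-v/2)^k) = f k v" for k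
    proof -
      have "v powr (b + real k - 1) = v powr (b-1) * v^k"
        using v by (simp add: powr_add[symmetric] powr_realpow[symmetric] algebra_simps)
      moreover have "(-v/2)^k = (-1/2)^k * v^k" by (simp add: power_mult_distrib[symmetric])
      ultimately show ?thesis using True by (simp add: f_def g_def c_def)
    qed
    ultimately show ?thesis using True by (simp add: F_def)
  next
    case False
    then show ?thesis by (simp add: f_def g_def F_def)
  qed
  have Feq: "F = (\<lambda>v. \<Sum>k. f k v)" using pw by (auto simp: sums_iff fun_eq_iff)
  have AEs: "AE v in lborel. summable (\<lambda>k. norm (f k v))"
  proof (rule AE_I2)
    fix v
    show "summable (\<lambda>k. norm (f k v))"
    proof (cases "v \<in> {0<..<1}")
      case True
      then have v: "0 < v" "v < 1" by auto
      show ?thesis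
      proof (rule summable_comparison_test'[where g="\<lambda>k. \<bar>s gchoose k\<bar> * (1/2)^k * (v powr (b-1) * (1-v) powr (a-1))"])
        show "summable (\<lambda>k. \<bar>s gchoose k\<bar> * (1/2)^k * (v powr (b-1) * (1-v) powr (a-1)))"
          by (intro summable_mult2 binom_abs_summable)
        fix k
        have "v powr (b + real k - 1) = v powr (b-1) * v^k"
          using v by (simp add: powr_add[symmetric] powr_realpow[symmetric] algebra_simps)
        also have "\<dots> \<le> v powr (b-1)" using v by (simp add: mult_left_le power_le_one)
        finally have "g k v \<le> v powr (b-1) * (1-v) powr (a-1)"
          using True by (simp add: g_def mult_right_mono)
        then show "norm (norm (f k v)) \<le> \<bar>s gchoose k\<bar> * (1/2)^k * (v powr (b-1) * (1-v) powr (a-1))"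
          unfolding nf using gnn[of k v] by (auto intro!: mult_left_mono)
      qed
    next
      case False
      then show ?thesis by (simp add: f_def g_def)
    qed
  qed
  have intF: "integrable lborel F"
    unfolding Feq by (rule integrable_suminf[OF fint AEs sum1])
  have sI: "(\<lambda>k. integral\<^sup>L lborel (f k)) sums integral\<^sup>L lborel F"
    unfolding Feq by (rule sums_integral[OF fint AEs sum1])
  define t where "t = (\<lambda>k. pochhammer (-s) k * pochhammer b k / pochhammer (a+b) k * (1/2)^k / fact k)"
  have Bpos: "Beta b a > 0" using a b by (simp add: Beta_def Gamma_real_pos)
  have teq: "integral\<^sup>L lborel (f k) = Beta b a * t k" for k
  proof -
    have "c k = pochhammer (-s) k / fact k * (1/2)^k"
      unfolding c_def gbinomial_pochhammer
      by (simp add: power_mult_distrib[symmetric] flip: power_mult_distrib)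
    then show ?thesis unfolding fI Beta_shift[OF a b] t_def by (simp add: mult_ac)
  qed
  have "(\<lambda>k. Beta b a * t k) sums integral\<^sup>L lborel F" using sI teq by simp
  then have "(\<lambda>k. Beta b a * t k / Beta b a) sums (integral\<^sup>L lborel F / Beta b a)"
    by (rule sums_divide)
  then have "t sums (integral\<^sup>L lborel F / Beta b a)" using Bpos by simp
  then have "hyp2F1 (-s) b (a+b) (1/2) = integral\<^sup>L lborel F / Beta b a"
    unfolding hyp2F1_def t_def by (simp add: sums_iff)
  then show "integral\<^sup>L lborel F = Beta b a * hyp2F1 (-s) b (a+b) (1/2)"
    using Bpos by simp
  show "integrable lborel F" by (rule intF)
qed




lemma order_stat_le_iff:
  fixes x :: "nat \<Rightarrow> real"
  assumes "1 \<le> i" "i \<le> n"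
  shows "order_stat n i x \<le> t \<longleftrightarrow> i \<le> card {k \<in> {1..n}. x k \<le> t}"
proof -
  define L where "L = map x [1..<n+1]"
  define s where "s = sort L"
  have ls: "length s = n" by (simp add: s_def L_def)
  have so: "sorted s" by (simp add: s_def)
  have "length (filter (\<lambda>y. y \<le> t) s) = length (filter (\<lambda>y. y \<le> t) L)"
    by (simp add: s_def filter_sort)
  also have "\<dots> = length (filter (\<lambda>k. x k \<le> t) [1..<n+1])"
    by (simp add: L_def filter_map o_def)
  also have "\<dots> = card ({k. x k \<le> t} \<inter> set [1..<n+1])"
    by (rule distinct_length_filter) simp
  also have "{k. x k \<le> t} \<inter> set [1..<n+1] = {k \<in> {1..n}. x k \<le> t}" by auto
  finally have c1: "card {k \<in> {1..n}. x k \<le> t} = card {j. j < n \<and> s ! j \<le> t}"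
    by (simp add: length_filter_conv_card ls)
  have os: "order_stat n i x = s ! (i - 1)" by (simp add: order_stat_def s_def L_def)
  show ?thesis
  proof
    assume h: "order_stat n i x \<le> t"
    have "{0..<i} \<subseteq> {j. j < n \<and> s ! j \<le> t}"
    proof
      fix j assume "j \<in> {0..<i}"
      then have j: "j \<le> i - 1" "j < n" using assms by auto
      have "s ! j \<le> s ! (i - 1)" using so j assms ls by (auto simp: sorted_iff_nth_mono)
      then show "j \<in> {j. j < n \<and> s ! j \<le> t}" using h os j by auto
    qed
    then have "card {0..<i} \<le> card {j. j < n \<and> s ! j \<le> t}"
      by (rule card_mono[rotated]) auto
    then show "i \<le> card {k \<in> {1..n}. x k \<le> t}" using c1 by simp
  next
    assume h: "i \<le> card {k \<in> {1..n}. x k \<le> t}"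
    show "order_stat n i x \<le> t"
    proof (rule ccontr)
      assume "\<not> order_stat n i x \<le> t"
      then have gt: "s ! (i - 1) > t" using os by simp
      have "{j. j < n \<and> s ! j \<le> t} \<subseteq> {0..<i-1}"
      proof
        fix j assume j: "j \<in> {j. j < n \<and> s ! j \<le> t}"
        show "j \<in> {0..<i-1}"
        proof (rule ccontr)
          assume "j \<notin> {0..<i-1}"
          then have "i - 1 \<le> j" by simp
          then have "s ! (i-1) \<le> s ! j" using so j ls by (auto simp: sorted_iff_nth_mono)
          then show False using gt j by simp
        qed
      qed
      then have "card {j. j < n \<and> s ! j \<le> t} \<le> card {0..<i-1}"
        by (rule card_mono[rotated]) auto
      then show False using h c1 assms by simp
    qed
  qed
qed

lemma order_stat_prob:
  fixes M :: "'a measure" and X :: "nat \<Rightarrow> 'a \<Rightarrow> real"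
  assumes P: "prob_space M"
    and "1 \<le> i" and "i \<le> n"
    and rv: "\<And>k. k \<in> {1..n} \<Longrightarrow> X k \<in> borel_measurable M"
    and indep: "prob_space.indep_vars M (\<lambda>_. borel) X {1..n}"
    and cdf: "\<And>k. k \<in> {1..n} \<Longrightarrow> measure M {\<omega> \<in> space M. X k \<omega> \<le> t} = p"
  shows "measure M {\<omega> \<in> space M. order_stat n i (\<lambda>k. X k \<omega>) \<le> t}
     = (\<Sum>k = i..n. real (n choose k) * p ^ k * (1 - p) ^ (n - k))"
proof -
  interpret prob_space M by (rule P)
  define A where "A = {1..n::nat}"
  have fA: "finite A" and cA: "card A = n" and neA: "A \<noteq> {}" using assms by (auto simp: A_def)
  define SS where "SS = {S. S \<subseteq> A \<and> i \<le> card S}"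
  have fSS: "finite SS" unfolding SS_def using fA by (auto intro: finite_subset[of _ "Pow A"])
  define E where "E = (\<lambda>S. {\<omega> \<in> space M. {k \<in> A. X k \<omega> \<le> t} = S})"
  define B where "B = (\<lambda>(S::nat set) (k::nat). if k \<in> S then {..t} else {t<..})"
  have EB: "E S = (\<Inter>k\<in>A. X k -` B S k \<inter> space M)" if "S \<subseteq> A" for S
  proof (rule set_eqI)
    fix \<omega>
    have 1: "\<omega> \<in> E S \<longleftrightarrow> \<omega> \<in> space M \<and> (\<forall>k\<in>A. (k \<in> S \<longleftrightarrow> X k \<omega> \<le> t))"
      using that unfolding E_def by blast
    have 2: "\<omega> \<in> (\<Inter>k\<in>A. X k -` B S k \<inter> space M) \<longleftrightarrow> \<omega> \<in> space M \<and> (\<forall>k\<in>A. X k \<omega> \<in> B S k)"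
      using neA by blast
    have 3: "X k \<omega> \<in> B S k \<longleftrightarrow> (k \<in> S \<longleftrightarrow> X k \<omega> \<le> t)" for k
      by (auto simp: B_def not_le)
    show "\<omega> \<in> E S \<longleftrightarrow> \<omega> \<in> (\<Inter>k\<in>A. X k -` B S k \<inter> space M)"
      using 1 2 3 by blast
  qed
  have sets_pre: "X k -` C \<inter> space M \<in> events" if "k \<in> A" "C \<in> sets borel" for k C
    using rv[of k] that by (auto simp: A_def measurable_sets)
  have pk: "prob (X k -` B S k \<inter> space M) = (if k \<in> S then p else 1 - p)" if "k \<in> A" for k S
  proof (cases "k \<in> S")
    case True
    have "X k -` {..t} \<inter> space M = {\<omega> \<in> space M. X k \<omega> \<le> t}" by auto
    then show ?thesis using True cdf[of k] that by (simp add: B_def A_def)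
  next
    case False
    have "X k -` {t<..} \<inter> space M = space M - {\<omega> \<in> space M. X k \<omega> \<le> t}" by auto
    moreover have "{\<omega> \<in> space M. X k \<omega> \<le> t} \<in> events"
      using rv[of k] that by (simp add: A_def)
    ultimately show ?thesis using False cdf[of k] that
      by (simp add: B_def A_def prob_compl)
  qed
  have pE: "prob (E S) = p ^ card S * (1 - p) ^ (n - card S)" if "S \<subseteq> A" for S
  proof -
    have "prob (E S) = (\<Prod>k\<in>A. prob (X k -` B S k \<inter> space M))"
      unfolding EB[OF that]
      by (rule indep_varsD[OF indep neA fA]) (auto simp: A_def B_def)
    also have "\<dots> = (\<Prod>k\<in>A. if k \<in> S then p else 1 - p)" using pk by simp
    also have "\<dots> = p ^ card S * (1 - p) ^ card (A - S)"
      using that fA by (simp add: prod.If_cases Int_absorb1 Diff_eq)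
    also have "card (A - S) = n - card S" using that fA cA by (simp add: card_Diff_subset finite_subset)
    finally show ?thesis .
  qed
  have evt: "{\<omega> \<in> space M. order_stat n i (\<lambda>k. X k \<omega>) \<le> t} = (\<Union>S\<in>SS. E S)"
    using assms(2,3) by (auto simp: order_stat_le_iff SS_def E_def A_def)
  have Eev: "E S \<in> events" if "S \<subseteq> A" for S
    unfolding EB[OF that] using fA neA
    by (intro sets.finite_INT sets_pre) (auto simp: B_def)
  have disj: "disjoint_family_on E SS" by (auto simp: disjoint_family_on_def E_def)
  have "measure M {\<omega> \<in> space M. order_stat n i (\<lambda>k. X k \<omega>) \<le> t} = (\<Sum>S\<in>SS. prob (E S))"
    unfolding evt using fSS disj Eev
    by (intro finite_measure_finite_Union) (auto simp: SS_def)
  also have "\<dots> = (\<Sum>S\<in>SS. p ^ card S * (1 - p) ^ (n - card S))"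
    by (intro sum.cong refl pE) (auto simp: SS_def)
  also have "\<dots> = (\<Sum>k\<in>{i..n}. \<Sum>S\<in>{S \<in> SS. card S = k}. p ^ card S * (1 - p) ^ (n - card S))"
  proof (rule sum.group[symmetric, OF fSS])
    show "finite {i..n}" by simp
    show "card ` SS \<subseteq> {i..n}" using fA cA by (auto simp: SS_def card_mono)
  qed
  also have "\<dots> = (\<Sum>k = i..n. real (n choose k) * p ^ k * (1 - p) ^ (n - k))"
  proof (rule sum.cong[OF refl])
    fix k assume k: "k \<in> {i..n}"
    have "{S \<in> SS. card S = k} = {S. S \<subseteq> A \<and> card S = k}" using k by (auto simp: SS_def)
    then have "(\<Sum>S\<in>{S \<in> SS. card S = k}. p ^ card S * (1 - p) ^ (n - card S))
        = (\<Sum>S\<in>{S. S \<subseteq> A \<and> card S = k}. p ^ k * (1 - p) ^ (n - k))" by simp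
    also have "\<dots> = real (card {S. S \<subseteq> A \<and> card S = k}) * (p ^ k * (1 - p) ^ (n - k))" by simp
    also have "card {S. S \<subseteq> A \<and> card S = k} = n choose k" using n_subsets[OF fA] cA by simp
    finally show "(\<Sum>S\<in>{S \<in> SS. card S = k}. p ^ card S * (1 - p) ^ (n - card S))
        = real (n choose k) * p ^ k * (1 - p) ^ (n - k)" by simp
  qed
  finally show ?thesis .
qed




definition hpol :: "nat \<Rightarrow> nat \<Rightarrow> real \<Rightarrow> real" where
  "hpol n i p = (\<Sum>k=i..n. real (n choose k) * p^k * (1-p)^(n-k))"

definition apol :: "nat \<Rightarrow> nat \<Rightarrow> real \<Rightarrow> real" where
  "apol n k p = real ((n-1) choose k) * p^k * (1-p)^(n-1-k)"

definition dpol :: "nat \<Rightarrow> nat \<Rightarrow> real \<Rightarrow> real" where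
  "dpol n i p = real n * real ((n-1) choose (i-1)) * p^(i-1) * (1-p)^(n-i)"

lemma term_deriv:
  assumes "1 \<le> k" "k \<le> n"
  shows "((\<lambda>p. real (n choose k) * p^k * (1-p)^(n-k)) has_real_derivative
          (real n * apol n (k-1) p - real n * apol n k p)) (at p)"
proof -
  have d: "((\<lambda>p. real (n choose k) * p^k * (1-p)^(n-k)) has_real_derivative
      (real (n choose k) * (real k * p^(k-1)) * (1-p)^(n-k)
       + real (n choose k) * p^k * (real (n-k) * (1-p)^(n-k-1) * (-1)))) (at p)"
    by (auto intro!: derivative_eq_intros)
  obtain k' where k': "k = Suc k'" using assms by (cases k) auto
  obtain n' where n': "n = Suc n'" using assms by (cases n) auto
  have e0: "k * (n choose k) = n * ((n-1) choose (k-1))"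
    using Suc_times_binomial[of k' n'] by (simp only: k' n' diff_Suc_1)
  have e1: "real (n choose k) * real k = real n * real ((n-1) choose (k-1))"
    using e0 by (metis of_nat_mult mult.commute)
  have e2: "real (n - k) * real (n choose k) = real n * real ((n-1) choose k)"
    using binomial_absorb_comp[of n k] by (metis of_nat_mult)
  have x1: "n - 1 - (k - 1) = n - k" using assms by simp
  have x2: "n - 1 - k = n - k - 1" by simp
  have "real (n choose k) * (real k * p^(k-1)) * (1-p)^(n-k)
       + real (n choose k) * p^k * (real (n-k) * (1-p)^(n-k-1) * (-1))
       = (real (n choose k) * real k) * p^(k-1) * (1-p)^(n-k)
         - (real (n - k) * real (n choose k)) * p^k * (1-p)^(n-k-1)" by (simp add: algebra_simps)
  also have "\<dots> = real n * apol n (k-1) p - real n * apol n k p"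
    unfolding e1 e2 apol_def x1 x2 by (simp add: algebra_simps)
  finally show ?thesis using d by simp
qed

lemma hpol_deriv:
  assumes "1 \<le> i" "i \<le> n"
  shows "(hpol n i has_real_derivative dpol n i p) (at p)"
proof -
  have "(hpol n i has_real_derivative (\<Sum>k=i..n. real n * apol n (k-1) p - real n * apol n k p)) (at p)"
    unfolding hpol_def
    by (rule DERIV_sum) (rule term_deriv, use assms in auto)
  moreover have "(\<Sum>k=i..n. real n * apol n (k-1) p - real n * apol n k p) = dpol n i p"
  proof -
    define f where "f = (\<lambda>k. - real n * apol n (k-1) p)"
    have "(\<Sum>k=i..n. real n * apol n (k-1) p - real n * apol n k p) = (\<Sum>k=i..n. f (Suc k) - f k)"
      by (intro sum.cong refl) (use assms in \<open>auto simp: f_def\<close>)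
    also have "\<dots> = f (Suc n) - f i" by (rule sum_Suc_diff) (use assms in auto)
    also have "f (Suc n) = 0" using assms by (simp add: f_def apol_def)
    also have "0 - f i = dpol n i p"
      using assms by (simp add: f_def apol_def dpol_def Suc_diff_le)
    finally show ?thesis .
  qed
  ultimately show ?thesis by simp
qed

lemma hpol_0: "1 \<le> i \<Longrightarrow> hpol n i 0 = 0"
  unfolding hpol_def by (intro sum.neutral) auto

lemma hpol_1: "i \<le> n \<Longrightarrow> hpol n i 1 = 1"
proof -
  assume a: "i \<le> n"
  have "hpol n i 1 = (\<Sum>k=i..n. if k = n then 1 else 0)"
    unfolding hpol_def by (intro sum.cong refl) auto
  also have "\<dots> = 1" using a by simp
  finally show ?thesis .
qed

lemma dpol_Beta:
  assumes "1 \<le> i" "i \<le> n"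
  shows "dpol n i p = p^(i-1) * (1-p)^(n-i) / Beta (real i) (real (n - i + 1))"
proof -
  have g1: "Gamma (real i) = fact (i - 1)"
    using Gamma_fact[of "i-1", where 'a=real] assms by (simp add: of_nat_diff)
  have g2: "Gamma (real (n - i + 1)) = fact (n - i)"
    using Gamma_fact[of "n-i", where 'a=real] by (simp add: add.commute)
  have g3: "Gamma (real i + real (n - i + 1)) = fact n"
    using Gamma_fact[of "n", where 'a=real] assms by (simp add: add.commute)
  have B: "Beta (real i) (real (n - i + 1)) = fact (i-1) * fact (n-i) / fact n"
    unfolding Beta_def g1 g2 g3 by simp
  have c: "real n * real ((n-1) choose (i-1)) = fact n / (fact (i-1) * fact (n-i))"
  proof -
    have "real ((n-1) choose (i-1)) = fact (n-1) / (fact (i-1) * fact (n - 1 - (i-1)))"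
      by (rule binomial_fact) (use assms in simp)
    moreover have "n - 1 - (i - 1) = n - i" using assms by simp
    moreover have "real n * fact (n-1) = fact n"
      using assms by (metis fact_reduce le_trans of_nat_fact of_nat_mult not_one_le_zero not_gr0 mult.commute)
    ultimately show ?thesis by (simp add: field_simps)
  qed
  show ?thesis unfolding dpol_def B c by (simp add: field_simps)
qed

lemma dpol_nonneg: "0 \<le> p \<Longrightarrow> p \<le> 1 \<Longrightarrow> 0 \<le> dpol n i p"
  unfolding dpol_def by simp




definition xm :: "real \<Rightarrow> real \<Rightarrow> real" where
  "xm lam v = lam * sqrt (v * (2 - v)) / (1 - v)"

definition Tm :: "real \<Rightarrow> real \<Rightarrow> real" where
  "Tm lam t = 1 - lam / sqrt (lam^2 + t^2)"

lemma sq_le_iff_nonneg: "0 \<le> (x::real) \<Longrightarrow> 0 \<le> y \<Longrightarrow> x \<le> y \<longleftrightarrow> x^2 \<le> y^2"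
  using abs_le_square_iff[of x y] by simp

lemma xm_pos: "lam > 0 \<Longrightarrow> 0 < v \<Longrightarrow> v < 1 \<Longrightarrow> xm lam v > 0"
  unfolding xm_def by (intro divide_pos_pos mult_pos_pos) auto

lemma Tm_bounds:
  assumes "lam > 0" "t > 0" shows "0 < Tm lam t" "Tm lam t < 1"
proof -
  have "lam < sqrt (lam^2 + t^2)"
    using assms by (intro real_less_rsqrt) simp
  moreover have "0 < sqrt (lam^2 + t^2)" using assms by (intro real_sqrt_gt_zero add_pos_nonneg) auto
  ultimately show "0 < Tm lam t" by (simp add: Tm_def divide_less_eq)
  show "Tm lam t < 1" using assms \<open>0 < sqrt (lam^2 + t^2)\<close> by (simp add: Tm_def)
qed

lemma xm_le_iff:
  assumes lam: "lam > 0" and v: "0 < v" "v < 1" and t: "t > 0"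
  shows "xm lam v \<le> t \<longleftrightarrow> v \<le> Tm lam t"
proof -
  define S where "S = sqrt (lam^2 + t^2)"
  have p: "0 < lam^2 + t^2" using lam by (intro add_pos_nonneg) auto
  have S: "S > 0" "S^2 = lam^2 + t^2" using p by (auto simp: S_def)
  have vv: "v * (2 - v) \<ge> 0" using v by simp
  have "xm lam v \<le> t \<longleftrightarrow> lam * sqrt (v * (2 - v)) \<le> t * (1 - v)"
    using v by (simp add: xm_def divide_le_eq)
  also have "\<dots> \<longleftrightarrow> (lam * sqrt (v * (2 - v)))^2 \<le> (t * (1 - v))^2"
    using v t lam by (intro sq_le_iff_nonneg) auto
  also have "\<dots> \<longleftrightarrow> lam^2 * (v * (2 - v)) \<le> t^2 * (1 - v)^2"
    using vv by (simp add: power_mult_distrib)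
  also have "\<dots> \<longleftrightarrow> lam^2 \<le> S^2 * (1 - v)^2"
    unfolding S by (simp add: algebra_simps power2_eq_square)
  also have "\<dots> \<longleftrightarrow> lam \<le> S * (1 - v)"
    using v S lam by (subst sq_le_iff_nonneg) (auto simp: power_mult_distrib)
  also have "\<dots> \<longleftrightarrow> lam / S \<le> 1 - v"
    using S by (simp add: divide_le_eq mult.commute)
  also have "\<dots> \<longleftrightarrow> v \<le> Tm lam t" by (auto simp: Tm_def S_def)
  finally show ?thesis .
qed

lemma xm_powr:
  assumes lam: "lam > 0" and v: "0 < v" "v < 1"
  shows "xm lam v powr r = lam powr r * 2 powr (r/2) * (v powr (r/2) * (1-v) powr (-r) * (1-v/2) powr (r/2))"
proof -
  have e: "v * (2 - v) = 2 * (v * (1 - v/2))" by (simp add: algebra_simps)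
  have "sqrt (v * (2 - v)) powr r = (v * (2 - v)) powr (r/2)"
    using v by (simp add: powr_half_sqrt[symmetric] powr_powr)
  also have "\<dots> = 2 powr (r/2) * (v powr (r/2) * (1-v/2) powr (r/2))"
    unfolding e using v by (simp add: powr_mult)
  finally have sq: "sqrt (v * (2 - v)) powr r = 2 powr (r/2) * (v powr (r/2) * (1-v/2) powr (r/2))" .
  have "xm lam v powr r = lam powr r * sqrt (v * (2 - v)) powr r / (1 - v) powr r"
    unfolding xm_def using lam v by (simp add: powr_divide powr_mult)
  also have "\<dots> = lam powr r * sqrt (v * (2 - v)) powr r * (1 - v) powr (-r)"
    using v by (simp add: powr_minus divide_inverse)
  finally show ?thesis unfolding sq by (simp add: mult_ac)
qed




definition rho :: "real \<Rightarrow> nat \<Rightarrow> nat \<Rightarrow> real \<Rightarrow> real" where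
  "rho \<beta> n i v = dpol n i (v powr \<beta>) * \<beta> * v powr (\<beta> - 1)"

lemma rho_deriv:
  assumes "\<beta> > 0" "1 \<le> i" "i \<le> n" "0 < v"
  shows "((\<lambda>v. hpol n i (v powr \<beta>)) has_real_derivative rho \<beta> n i v) (at v)"
proof -
  have d1: "((\<lambda>v. v powr \<beta>) has_real_derivative \<beta> * v powr (\<beta> - 1)) (at v)"
    using assms by (auto intro!: derivative_eq_intros simp: powr_diff field_simps)
  show ?thesis
    using DERIV_chain2[OF hpol_deriv[OF assms(2,3)] d1] by (simp add: rho_def mult_ac)
qed

lemma rho_cont:
  assumes "0 < v" shows "isCont (rho \<beta> n i) v"
  using assms unfolding rho_def dpol_def by (auto intro!: continuous_intros)

lemma rho_nonneg:
  assumes "\<beta> > 0" "0 < v" "v \<le> 1" shows "0 \<le> rho \<beta> n i v"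
proof -
  have "v powr \<beta> \<le> 1" using assms by (intro powr_le1) auto
  then show ?thesis using assms unfolding rho_def
    by (intro mult_nonneg_nonneg dpol_nonneg) auto
qed

lemma rho_FTC:
  assumes b: "\<beta> > 0" and i: "1 \<le> i" "i \<le> n" and c: "0 < c" "c \<le> 1"
  shows "set_integrable lborel {0<..<c} (rho \<beta> n i)"
    "(LINT v:{0<..<c}|lborel. rho \<beta> n i v) = hpol n i (c powr \<beta>)"
proof -
  define H where "H = (\<lambda>v. hpol n i (v powr \<beta>))"
  have cH: "isCont (hpol n i) p" for p
    using hpol_deriv[OF i] by (rule DERIV_isCont)
  have A: "((H \<circ> real_of_ereal) \<longlongrightarrow> 0) (at_right (ereal 0))"
  proof -
    have "((\<lambda>v. v powr \<beta>) \<longlongrightarrow> 0) (at_right (0::real))"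
      by (rule tendsto_zero_powrI[where b=\<beta>]) (auto simp: b eventually_at_right_less eventually_at_filter intro!: tendsto_ident_at)
    then have "((\<lambda>v. hpol n i (v powr \<beta>)) \<longlongrightarrow> hpol n i 0) (at_right (0::real))"
      by (rule isCont_tendsto_compose[OF cH])
    then show ?thesis unfolding ereal_tendsto_simps1 H_def using hpol_0[OF i(1)] by simp
  qed
  have B: "((H \<circ> real_of_ereal) \<longlongrightarrow> hpol n i (c powr \<beta>)) (at_left (ereal c))"
  proof -
    have "isCont H c" unfolding H_def using c
      by (intro DERIV_isCont[OF rho_deriv[OF b i]]) auto
    then have "(H \<longlongrightarrow> H c) (at_left c)"
      by (simp add: isCont_def filterlim_at_split)
    then show ?thesis unfolding ereal_tendsto_simps1 H_def by simp
  qed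
  have "0 < ereal c" using c by simp
  note ftc = interval_integral_FTC_nonneg[OF this, where F=H and f="rho \<beta> n i" and A=0 and B="hpol n i (c powr \<beta>)"]
  have d: "\<And>x. ereal 0 < ereal x \<Longrightarrow> ereal x < ereal c \<Longrightarrow> DERIV H x :> rho \<beta> n i x"
    unfolding H_def using rho_deriv[OF b i] by simp
  have co: "\<And>x. ereal 0 < ereal x \<Longrightarrow> ereal x < ereal c \<Longrightarrow> isCont (rho \<beta> n i) x"
    using rho_cont by simp
  have nn: "AE x in lborel. ereal 0 < ereal x \<longrightarrow> ereal x < ereal c \<longrightarrow> 0 \<le> rho \<beta> n i x"
    using rho_nonneg[OF b] c by (intro AE_I2) auto
  have r1: "set_integrable lborel (einterval 0 (ereal c)) (rho \<beta> n i)"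
    and r2: "(LBINT x=0..ereal c. rho \<beta> n i x) = hpol n i (c powr \<beta>) - 0"
    using ftc d co nn A B by (simp_all add: zero_ereal_def)
  show "set_integrable lborel {0<..<c} (rho \<beta> n i)"
    using r1 by (simp add: zero_ereal_def)
  show "(LINT v:{0<..<c}|lborel. rho \<beta> n i v) = hpol n i (c powr \<beta>)"
    using r2 c by (simp add: interval_lebesgue_integral_def zero_ereal_def)
qed

definition rhoI :: "real \<Rightarrow> nat \<Rightarrow> nat \<Rightarrow> real \<Rightarrow> real" where
  "rhoI \<beta> n i v = indicator {0<..<1} v * rho \<beta> n i v"

definition nu :: "real \<Rightarrow> real \<Rightarrow> nat \<Rightarrow> nat \<Rightarrow> real measure" where
  "nu \<beta> lam n i = distr (density lborel (rhoI \<beta> n i)) borel (xm lam)"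

lemma rhoI_meas[measurable]: "rhoI \<beta> n i \<in> borel_measurable borel"
  unfolding rhoI_def rho_def dpol_def by measurable

lemma xm_meas[measurable]: "xm lam \<in> borel_measurable borel"
  unfolding xm_def by measurable

lemma rhoI_nonneg: "\<beta> > 0 \<Longrightarrow> 0 \<le> rhoI \<beta> n i v"
  unfolding rhoI_def using rho_nonneg[of \<beta> v n i] by (auto simp: indicator_def)

lemma rho_int:
  assumes b: "\<beta> > 0" and i: "1 \<le> i" "i \<le> n" and c: "0 < c" "c \<le> 1"
  shows "integrable lborel (\<lambda>v. indicator {0<..<c} v * rhoI \<beta> n i v)"
    "(\<integral>v. indicator {0<..<c} v * rhoI \<beta> n i v \<partial>lborel) = hpol n i (c powr \<beta>)"
proof -
  have eq: "(\<lambda>v. indicator {0<..<c} v * rhoI \<beta> n i v) = (\<lambda>v. indicator {0<..<c} v *\<^sub>R rho \<beta> n i v)"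
    using c by (auto simp: rhoI_def indicator_def fun_eq_iff)
  show "integrable lborel (\<lambda>v. indicator {0<..<c} v * rhoI \<beta> n i v)"
    using rho_FTC(1)[OF b i c] unfolding eq set_integrable_def .
  show "(\<integral>v. indicator {0<..<c} v * rhoI \<beta> n i v \<partial>lborel) = hpol n i (c powr \<beta>)"
    using rho_FTC(2)[OF b i c] unfolding eq set_lebesgue_integral_def .
qed

lemma emeasure_dens:
  assumes b: "\<beta> > 0" and A: "A \<in> sets borel"
    and int: "integrable lborel (\<lambda>v. indicator A v * rhoI \<beta> n i v)"
  shows "emeasure (density lborel (rhoI \<beta> n i)) A = ennreal (\<integral>v. indicator A v * rhoI \<beta> n i v \<partial>lborel)"
proof -
  have "emeasure (density lborel (rhoI \<beta> n i)) A = (\<integral>\<^sup>+ v. ennreal (rhoI \<beta> n i v) * indicator A v \<partial>lborel)"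
    using A by (intro emeasure_density) auto
  also have "\<dots> = (\<integral>\<^sup>+ v. ennreal (indicator A v * rhoI \<beta> n i v) \<partial>lborel)"
    by (intro nn_integral_cong) (auto simp: indicator_def)
  also have "\<dots> = ennreal (\<integral>v. indicator A v * rhoI \<beta> n i v \<partial>lborel)"
    using int rhoI_nonneg[OF b] by (intro nn_integral_eq_integral) auto
  finally show ?thesis .
qed

lemma nu_emeasure:
  assumes "A \<in> sets borel"
  shows "emeasure (nu \<beta> lam n i) A = emeasure (density lborel (rhoI \<beta> n i)) (xm lam -` A)"
  unfolding nu_def using assms by (subst emeasure_distr) auto

lemma nu_real_distribution:
  assumes b: "\<beta> > 0" and i: "1 \<le> i" "i \<le> n"
  shows "real_distribution (nu \<beta> lam n i)"
proof -
  have "emeasure (nu \<beta> lam n i) UNIV = emeasure (density lborel (rhoI \<beta> n i)) UNIV"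
    using nu_emeasure[of UNIV] by simp
  also have "\<dots> = emeasure (density lborel (rhoI \<beta> n i)) {0<..<1}"
  proof -
    have "emeasure (density lborel (rhoI \<beta> n i)) UNIV = (\<integral>\<^sup>+ v. ennreal (rhoI \<beta> n i v) * indicator UNIV v \<partial>lborel)"
      by (intro emeasure_density) auto
    also have "\<dots> = (\<integral>\<^sup>+ v. ennreal (rhoI \<beta> n i v) * indicator {0<..<1} v \<partial>lborel)"
      by (intro nn_integral_cong) (auto simp: indicator_def rhoI_def)
    also have "\<dots> = emeasure (density lborel (rhoI \<beta> n i)) {0<..<1}"
      by (intro emeasure_density[symmetric]) auto
    finally show ?thesis .
  qed
  also have "\<dots> = ennreal (hpol n i (1 powr \<beta>))"
    using emeasure_dens[OF b _ rho_int(1)[OF b i, of 1]] rho_int(2)[OF b i, of 1] by simp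
  also have "\<dots> = 1" using hpol_1[OF i(2)] by simp
  finally have "emeasure (nu \<beta> lam n i) UNIV = 1" .
  then have "prob_space (nu \<beta> lam n i)"
    by (intro prob_spaceI) (simp add: nu_def)
  then show ?thesis
    by (simp add: real_distribution_def real_distribution_axioms_def nu_def)
qed

lemma cdf_nu:
  assumes b: "\<beta> > 0" and i: "1 \<le> i" "i \<le> n" and lam: "lam > 0"
  shows "cdf (nu \<beta> lam n i) t = hpol n i (ecr_cdf \<beta> lam t)"
proof (cases "t > 0")
  case True
  define c where "c = Tm lam t"
  have c: "0 < c" "c < 1" using Tm_bounds[OF lam True] by (auto simp: c_def)
  have "emeasure (nu \<beta> lam n i) {..t} = emeasure (density lborel (rhoI \<beta> n i)) (xm lam -` {..t})"
    by (rule nu_emeasure) simp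
  also have "\<dots> = ennreal (\<integral>v. indicator (xm lam -` {..t}) v * rhoI \<beta> n i v \<partial>lborel)"
  proof (rule emeasure_dens[OF b])
    show "xm lam -` {..t} \<in> sets borel" by (rule measurable_sets_borel[OF xm_meas]) simp
    have ae: "AE v in lborel. indicator (xm lam -` {..t}) v * rhoI \<beta> n i v = indicator {0<..<c} v * rhoI \<beta> n i v"
      using AE_lborel_singleton[of c]
    proof eventually_elim
      case (elim v)
      show ?case
      proof (cases "0 < v \<and> v < 1")
        case True
        then have "xm lam v \<le> t \<longleftrightarrow> v \<le> c" using xm_le_iff[OF lam _ _ \<open>t > 0\<close>] by (simp add: c_def)
        then show ?thesis using elim True by (auto simp: indicator_def)
      next
        case False
        then show ?thesis by (auto simp: indicator_def rhoI_def)
      qed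
    qed
    show "integrable lborel (\<lambda>v. indicator (xm lam -` {..t}) v * rhoI \<beta> n i v)"
      using integrable_cong_AE[OF _ _ ae] rho_int(1)[OF b i c(1)] c by (auto simp: less_imp_le)
  qed
  finally have em: "emeasure (nu \<beta> lam n i) {..t} = ennreal (\<integral>v. indicator (xm lam -` {..t}) v * rhoI \<beta> n i v \<partial>lborel)" .
  have "cdf (nu \<beta> lam n i) t = (\<integral>v. indicator (xm lam -` {..t}) v * rhoI \<beta> n i v \<partial>lborel)"
    unfolding cdf_def measure_def em using rhoI_nonneg[OF b] by (simp add: integral_nonneg)
  also have "\<dots> = (\<integral>v. indicator {0<..<c} v * rhoI \<beta> n i v \<partial>lborel)"
  proof (rule integral_cong_AE)
    show "AE v in lborel. indicator (xm lam -` {..t}) v * rhoI \<beta> n i v = indicator {0<..<c} v * rhoI \<beta> n i v"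
      using AE_lborel_singleton[of c]
    proof eventually_elim
      case (elim v)
      show ?case
      proof (cases "0 < v \<and> v < 1")
        case True
        then have "xm lam v \<le> t \<longleftrightarrow> v \<le> c" using xm_le_iff[OF lam _ _ \<open>t > 0\<close>] by (simp add: c_def)
        then show ?thesis using elim True by (auto simp: indicator_def)
      next
        case False
        then show ?thesis by (auto simp: indicator_def rhoI_def)
      qed
    qed
  qed auto
  also have "\<dots> = hpol n i (c powr \<beta>)" using rho_int(2)[OF b i c(1)] c by simp
  also have "c powr \<beta> = ecr_cdf \<beta> lam t" using True by (simp add: ecr_cdf_def c_def Tm_def)
  finally show ?thesis .
next
  case False
  have "emeasure (nu \<beta> lam n i) {..t} = emeasure (density lborel (rhoI \<beta> n i)) (xm lam -` {..t})"
    by (rule nu_emeasure) simp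
  also have "\<dots> = (\<integral>\<^sup>+ v. ennreal (rhoI \<beta> n i v) * indicator (xm lam -` {..t}) v \<partial>lborel)"
    by (intro emeasure_density) (auto simp: measurable_sets_borel[OF xm_meas])
  also have "\<dots> = 0"
  proof -
    have "(\<lambda>v. ennreal (rhoI \<beta> n i v) * indicator (xm lam -` {..t}) v) = (\<lambda>v. 0)"
    proof (rule ext)
      fix v
      show "ennreal (rhoI \<beta> n i v) * indicator (xm lam -` {..t}) v = 0"
      proof (cases "0 < v \<and> v < 1")
        case True
        then have "xm lam v > 0" using xm_pos[OF lam] by auto
        then show ?thesis using False by (auto simp: indicator_def)
      next
        case False
        then show ?thesis by (auto simp: indicator_def rhoI_def)
      qed
    qed
    then show ?thesis by simp
  qed
  finally have "emeasure (nu \<beta> lam n i) {..t} = 0" by simp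
  then have "cdf (nu \<beta> lam n i) t = 0" by (simp add: cdf_def measure_def)
  also have "0 = hpol n i (ecr_cdf \<beta> lam t)" using False hpol_0[OF i(1)] by (simp add: ecr_cdf_def)
  finally show ?thesis .
qed




lemma binom_one_minus:
  fixes x :: real
  shows "(1 - x)^m = (\<Sum>j=0..m. real (m choose j) * (-1)^j * x^j)"
proof -
  have e: "1 - x = -x + 1" by simp
  have "(1 - x)^m = (\<Sum>j\<le>m. of_nat (m choose j) * (-x)^j * 1^(m-j))"
    unfolding e by (rule binomial_ring)
  also have "\<dots> = (\<Sum>j=0..m. real (m choose j) * (-1)^j * x^j)"
  proof (unfold atLeast0AtMost, rule sum.cong[OF refl])
    fix j
    have "(-x)^j = (-1)^j * x^j" by (rule power_minus)
    then show "of_nat (m choose j) * (-x)^j * 1^(m-j) = real (m choose j) * (-1)^j * x^j"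
      by (simp only: power_one mult_1_right of_nat_id mult.assoc)
  qed
  finally show ?thesis .
qed

lemma rho_expand:
  assumes i: "1 \<le> i" "i \<le> n" and v: "0 < v"
  shows "rho \<beta> n i v = \<beta> / Beta (real i) (real (n - i + 1)) *
     (\<Sum>j=0..n-i. (-1)^j * real ((n-i) choose j) * v powr (real (i+j) * \<beta> - 1))"
proof -
  define B0 where "B0 = Beta (real i) (real (n - i + 1))"
  have bin: "(1 - v powr \<beta>)^(n-i) = (\<Sum>j=0..n-i. real ((n-i) choose j) * (-1)^j * (v powr \<beta>)^j)"
    by (rule binom_one_minus)
  have t: "(v powr \<beta>)^(i-1) * v powr (\<beta> - 1) * (v powr \<beta>)^j = v powr (real (i+j) * \<beta> - 1)" for j
  proof -
    have "(v powr \<beta>)^(i-1) * v powr (\<beta> - 1) * (v powr \<beta>)^j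
        = v powr (real (i-1) * \<beta>) * v powr (\<beta> - 1) * v powr (real j * \<beta>)"
      using v by (simp add: powr_power)
    also have "\<dots> = v powr (real (i-1) * \<beta> + (\<beta> - 1) + real j * \<beta>)"
      by (simp add: powr_add)
    also have "real (i-1) * \<beta> + (\<beta> - 1) + real j * \<beta> = real (i+j) * \<beta> - 1"
      using i by (simp add: of_nat_diff algebra_simps)
    finally show ?thesis .
  qed
  have "rho \<beta> n i v = (v powr \<beta>)^(i-1) * v powr (\<beta> - 1) * (1 - v powr \<beta>)^(n-i) * \<beta> / B0"
    unfolding rho_def dpol_Beta[OF i] B0_def by (simp add: mult_ac)
  also have "\<dots> = \<beta> / B0 * (\<Sum>j=0..n-i. (-1)^j * real ((n-i) choose j) *
      ((v powr \<beta>)^(i-1) * v powr (\<beta> - 1) * (v powr \<beta>)^j))"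
    unfolding bin by (simp add: sum_distrib_left sum_divide_distrib mult_ac)
  also have "\<dots> = \<beta> / B0 * (\<Sum>j=0..n-i. (-1)^j * real ((n-i) choose j) * v powr (real (i+j) * \<beta> - 1))"
    unfolding t ..
  finally show ?thesis unfolding B0_def .
qed

lemma final_integral:
  assumes b: "\<beta> > 0" and lam: "lam > 0" and i: "1 \<le> i" "i \<le> n"
    and r: "- 2 * real i * \<beta> < r" "r < 1"
  shows "integrable lborel (\<lambda>v. rhoI \<beta> n i v * xm lam v powr r)"
    "(\<integral>v. rhoI \<beta> n i v * xm lam v powr r \<partial>lborel) =
      \<beta> * (lam * sqrt 2) powr r / Beta (real i) (real (n - i + 1))
        * (\<Sum>j = 0..n - i. (-1) ^ j * real ((n - i) choose j)
            * Beta (1 - r) (r / 2 + real (i + j) * \<beta>)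
            * hyp2F1 (- r / 2) (r / 2 + real (i + j) * \<beta>) (1 - r / 2 + real (i + j) * \<beta>) (1 / 2))"
proof -
  define B0 where "B0 = Beta (real i) (real (n - i + 1))"
  define bj where "bj = (\<lambda>j::nat. r / 2 + real (i + j) * \<beta>)"
  define F where "F = (\<lambda>j v. indicator {0<..<1} v * (v powr (bj j - 1) * (1-v) powr ((1-r) - 1) * (1 - v/2) powr (r/2)))"
  define K where "K = (\<lambda>j::nat. \<beta> / B0 * ((-1)^j * real ((n-i) choose j)) * (lam powr r * 2 powr (r/2)))"
  have bpos: "bj j > 0" for j
  proof -
    have "real i * \<beta> \<le> real (i+j) * \<beta>" using b by (intro mult_right_mono) auto
    then show ?thesis using r(1) by (simp add: bj_def)
  qed
  have a: "1 - r > 0" using r by simp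
  have Fint: "integrable lborel (F j)" for j
    using euler(1)[OF a bpos[of j], of "r/2"] unfolding F_def .
  have FI: "integral\<^sup>L lborel (F j) = Beta (1 - r) (bj j) * hyp2F1 (- r / 2) (bj j) (1 - r / 2 + real (i + j) * \<beta>) (1/2)" for j
  proof -
    have "integral\<^sup>L lborel (F j) = Beta (bj j) (1 - r) * hyp2F1 (- (r/2)) (bj j) (1 - r + bj j) (1/2)"
      using euler(2)[OF a bpos[of j], of "r/2"] unfolding F_def .
    moreover have "1 - r + bj j = 1 - r / 2 + real (i + j) * \<beta>" by (simp add: bj_def)
    moreover have "- (r/2) = - r / 2" by simp
    moreover have "Beta (bj j) (1 - r) = Beta (1 - r) (bj j)" by (rule Beta_commute)
    ultimately show ?thesis by (simp only:)
  qed
  have pw: "rhoI \<beta> n i v * xm lam v powr r = (\<Sum>j=0..n-i. K j * F j v)" for v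
  proof (cases "0 < v \<and> v < 1")
    case True
    then have v: "0 < v" "v < 1" by auto
    have "rhoI \<beta> n i v * xm lam v powr r = \<beta> / B0 *
      (\<Sum>j=0..n-i. (-1)^j * real ((n-i) choose j) * v powr (real (i+j) * \<beta> - 1)) *
      (lam powr r * 2 powr (r/2) * (v powr (r/2) * (1-v) powr (-r) * (1-v/2) powr (r/2)))"
    proof -
      have "indicator {0<..<1} v = (1::real)" using True by simp
      then show ?thesis unfolding rhoI_def rho_expand[OF i v(1)] xm_powr[OF lam v] B0_def
        by (simp only: mult_1_left)
    qed
    also have "\<dots> = (\<Sum>j=0..n-i. K j * F j v)"
      unfolding sum_distrib_left sum_distrib_right
    proof (intro sum.cong refl)
      fix j
      show "\<beta> / B0 * ((-1)^j * real ((n-i) choose j) * v powr (real (i+j) * \<beta> - 1)) *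
          (lam powr r * 2 powr (r/2) * (v powr (r/2) * (1-v) powr (-r) * (1-v/2) powr (r/2))) = K j * F j v"
      proof -
        have ind: "indicator {0<..<1} v = (1::real)" using True by simp
        have e1: "v powr (bj j - 1) = v powr (real (i+j) * \<beta> - 1) * v powr (r/2)"
          by (simp add: bj_def powr_add[symmetric] algebra_simps)
        have e2: "(1-v) powr ((1-r) - 1) = (1 - v) powr (-r)" by simp
        show ?thesis unfolding K_def F_def ind e1 e2 by (simp add: mult_ac)
      qed
    qed
    finally show ?thesis .
  next
    case False
    then show ?thesis by (simp add: rhoI_def F_def)
  qed
  have eqf: "(\<lambda>v. rhoI \<beta> n i v * xm lam v powr r) = (\<lambda>v. \<Sum>j=0..n-i. K j * F j v)"
    using pw by auto
  show "integrable lborel (\<lambda>v. rhoI \<beta> n i v * xm lam v powr r)"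
    unfolding eqf using integrable_mult_right[OF Fint] by simp
  have "(\<integral>v. rhoI \<beta> n i v * xm lam v powr r \<partial>lborel) = (\<Sum>j=0..n-i. K j * integral\<^sup>L lborel (F j))"
    unfolding eqf by (simp only: Bochner_Integration.integral_sum[OF integrable_mult_right[OF Fint]] integral_mult_right_zero)
  also have "\<dots> = (\<Sum>j=0..n-i. K j * (Beta (1 - r) (bj j) * hyp2F1 (- r / 2) (bj j) (1 - r / 2 + real (i + j) * \<beta>) (1/2)))"
    unfolding FI ..
  also have "\<dots> = \<beta> * (lam * sqrt 2) powr r / B0
        * (\<Sum>j = 0..n - i. (-1) ^ j * real ((n - i) choose j)
            * Beta (1 - r) (bj j)
            * hyp2F1 (- r / 2) (bj j) (1 - r / 2 + real (i + j) * \<beta>) (1 / 2))"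
  proof -
    have s2: "(lam * sqrt 2) powr r = lam powr r * 2 powr (r/2)"
      using lam by (simp add: powr_mult powr_half_sqrt[symmetric] powr_powr)
    show ?thesis unfolding s2 K_def sum_distrib_left by (intro sum.cong refl) (simp add: mult_ac)
  qed
  finally show "(\<integral>v. rhoI \<beta> n i v * xm lam v powr r \<partial>lborel) =
      \<beta> * (lam * sqrt 2) powr r / Beta (real i) (real (n - i + 1))
        * (\<Sum>j = 0..n - i. (-1) ^ j * real ((n - i) choose j)
            * Beta (1 - r) (r / 2 + real (i + j) * \<beta>)
            * hyp2F1 (- r / 2) (r / 2 + real (i + j) * \<beta>) (1 - r / 2 + real (i + j) * \<beta>) (1 / 2))"
    unfolding B0_def bj_def .
qed




lemma order_stat_event:
  fixes M :: "'a measure" and X :: "nat \<Rightarrow> 'a \<Rightarrow> real"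
  assumes "1 \<le> i" and "i \<le> n"
    and rv: "\<And>k. k \<in> {1..n} \<Longrightarrow> X k \<in> borel_measurable M"
  shows "{\<omega> \<in> space M. order_stat n i (\<lambda>k. X k \<omega>) \<le> t} \<in> sets M"
proof -
  define A where "A = {1..n::nat}"
  define SS where "SS = {S. S \<subseteq> A \<and> i \<le> card S}"
  have fA: "finite A" by (simp add: A_def)
  have fSS: "finite SS" unfolding SS_def using fA by (auto intro: finite_subset[of _ "Pow A"])
  have ne: "S \<noteq> {}" if "S \<in> SS" for S using that assms by (auto simp: SS_def)
  have eq: "{\<omega> \<in> space M. order_stat n i (\<lambda>k. X k \<omega>) \<le> t} = (\<Union>S\<in>SS. \<Inter>k\<in>S. {\<omega> \<in> space M. X k \<omega> \<le> t})"
  proof (rule set_eqI)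
    fix \<omega>
    show "\<omega> \<in> {\<omega> \<in> space M. order_stat n i (\<lambda>k. X k \<omega>) \<le> t} \<longleftrightarrow> \<omega> \<in> (\<Union>S\<in>SS. \<Inter>k\<in>S. {\<omega> \<in> space M. X k \<omega> \<le> t})"
    proof
      assume h: "\<omega> \<in> {\<omega> \<in> space M. order_stat n i (\<lambda>k. X k \<omega>) \<le> t}"
      then have "i \<le> card {k \<in> A. X k \<omega> \<le> t}" using order_stat_le_iff[OF assms(1,2)] by (auto simp: A_def)
      then have "{k \<in> A. X k \<omega> \<le> t} \<in> SS" by (auto simp: SS_def)
      then show "\<omega> \<in> (\<Union>S\<in>SS. \<Inter>k\<in>S. {\<omega> \<in> space M. X k \<omega> \<le> t})"
        by (rule UN_I) (use h in auto)
    next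
      assume "\<omega> \<in> (\<Union>S\<in>SS. \<Inter>k\<in>S. {\<omega> \<in> space M. X k \<omega> \<le> t})"
      then obtain S where S: "S \<in> SS" "\<And>k. k \<in> S \<Longrightarrow> \<omega> \<in> space M \<and> X k \<omega> \<le> t" by auto
      have sp: "\<omega> \<in> space M" using S ne[OF S(1)] by blast
      have "S \<subseteq> {k \<in> A. X k \<omega> \<le> t}" using S by (auto simp: SS_def)
      then have "card S \<le> card {k \<in> A. X k \<omega> \<le> t}" by (intro card_mono) (auto simp: fA)
      then have "i \<le> card {k \<in> {1..n}. X k \<omega> \<le> t}" using S(1) by (auto simp: SS_def A_def)
      then show "\<omega> \<in> {\<omega> \<in> space M. order_stat n i (\<lambda>k. X k \<omega>) \<le> t}"
        using sp order_stat_le_iff[OF assms(1,2)] by auto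
    qed
  qed
  have "(\<Union>S\<in>SS. \<Inter>k\<in>S. {\<omega> \<in> space M. X k \<omega> \<le> t}) \<in> sets M"
  proof (intro sets.finite_UN fSS ballI sets.finite_INT)
    fix S k assume "S \<in> SS" "k \<in> S"
    then have "k \<in> {1..n}" by (auto simp: SS_def A_def)
    then show "{\<omega> \<in> space M. X k \<omega> \<le> t} \<in> sets M" using rv[of k] by simp
  next
    fix S assume "S \<in> SS" then show "finite S" "S \<noteq> {}"
      using ne fA by (auto simp: SS_def intro: finite_subset)
  qed
  then show ?thesis unfolding eq .
qed

theorem proposition8:
  fixes M :: "'a measure" and X :: "nat \<Rightarrow> 'a \<Rightarrow> real"
    and \<beta> lam r :: real and n i :: nat
  assumes "prob_space M"
    and "\<beta> > 0" and "lam > 0"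
    and "1 \<le> i" and "i \<le> n"
    and "- 2 * real i * \<beta> < r" and "r < 1"
    and rv: "\<And>k. k \<in> {1..n} \<Longrightarrow> X k \<in> borel_measurable M"
    and indep: "prob_space.indep_vars M (\<lambda>_. borel) X {1..n}"
    and cdf: "\<And>k x. k \<in> {1..n} \<Longrightarrow> measure M {\<omega> \<in> space M. X k \<omega> \<le> x} = ecr_cdf \<beta> lam x"
  shows "integrable M (\<lambda>\<omega>. order_stat n i (\<lambda>k. X k \<omega>) powr r)
    \<and> (\<integral>\<omega>. order_stat n i (\<lambda>k. X k \<omega>) powr r \<partial>M)
      = \<beta> * (lam * sqrt 2) powr r / Beta (real i) (real (n - i + 1))
        * (\<Sum>j = 0..n - i. (-1) ^ j * real ((n - i) choose j)
            * Beta (1 - r) (r / 2 + real (i + j) * \<beta>)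
            * hyp2F1 (- r / 2) (r / 2 + real (i + j) * \<beta>) (1 - r / 2 + real (i + j) * \<beta>) (1 / 2))"
proof -
  interpret prob_space M by fact
  define Y where "Y = (\<lambda>\<omega>. order_stat n i (\<lambda>k. X k \<omega>))"
  have ev: "{\<omega> \<in> space M. order_stat n i (\<lambda>k. X k \<omega>) \<le> t} \<in> events" for t
    by (rule order_stat_event[OF assms(4,5)]) (rule rv)
  have Ymeas[measurable]: "Y \<in> borel_measurable M"
    unfolding borel_measurable_iff_le Y_def using ev by blast
  have rd: "real_distribution (distr M borel Y)" by (rule real_distribution_distr) simp
  have cdfeq: "cdf (distr M borel Y) = cdf (nu \<beta> lam n i)"
  proof
    fix t
    have "cdf (distr M borel Y) t = measure M (Y -` {..t} \<inter> space M)"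
      unfolding cdf_def by (rule measure_distr) auto
    also have "Y -` {..t} \<inter> space M = {\<omega> \<in> space M. order_stat n i (\<lambda>k. X k \<omega>) \<le> t}"
      by (auto simp: Y_def)
    also have "measure M \<dots> = hpol n i (ecr_cdf \<beta> lam t)"
      unfolding hpol_def
      by (rule order_stat_prob[OF assms(1,4,5) rv indep]) (use cdf in auto)
    also have "\<dots> = cdf (nu \<beta> lam n i) t"
      by (rule cdf_nu[symmetric]) (use assms in auto)
    finally show "cdf (distr M borel Y) t = cdf (nu \<beta> lam n i) t" .
  qed
  have dist: "distr M borel Y = nu \<beta> lam n i"
    by (rule cdf_unique[OF rd nu_real_distribution cdfeq]) (use assms in auto)
  have pm[measurable]: "(\<lambda>y::real. y powr r) \<in> borel_measurable borel" by measurable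
  have nn: "AE v in lborel. 0 \<le> rhoI \<beta> n i v" using rhoI_nonneg[OF assms(2)] by simp
  have i1: "integrable M (\<lambda>\<omega>. Y \<omega> powr r) \<longleftrightarrow> integrable (nu \<beta> lam n i) (\<lambda>y. y powr r)"
    unfolding dist[symmetric] by (rule integrable_distr_eq[symmetric]) auto
  also have "\<dots> \<longleftrightarrow> integrable (density lborel (rhoI \<beta> n i)) (\<lambda>v. xm lam v powr r)"
    unfolding nu_def by (rule integrable_distr_eq) auto
  also have "\<dots> \<longleftrightarrow> integrable lborel (\<lambda>v. rhoI \<beta> n i v *\<^sub>R xm lam v powr r)"
    by (rule integrable_density) (auto simp: nn)
  finally have int: "integrable M (\<lambda>\<omega>. Y \<omega> powr r)"
    using final_integral(1)[OF assms(2,3,4,5,6,7)] by simp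
  have "(\<integral>\<omega>. Y \<omega> powr r \<partial>M) = integral\<^sup>L (nu \<beta> lam n i) (\<lambda>y. y powr r)"
    unfolding dist[symmetric] by (rule integral_distr[symmetric]) auto
  also have "\<dots> = integral\<^sup>L (density lborel (rhoI \<beta> n i)) (\<lambda>v. xm lam v powr r)"
    unfolding nu_def by (rule integral_distr) auto
  also have "\<dots> = (\<integral>v. rhoI \<beta> n i v *\<^sub>R xm lam v powr r \<partial>lborel)"
    by (rule integral_density) (auto simp: nn)
  also have "\<dots> = \<beta> * (lam * sqrt 2) powr r / Beta (real i) (real (n - i + 1))
        * (\<Sum>j = 0..n - i. (-1) ^ j * real ((n - i) choose j)
            * Beta (1 - r) (r / 2 + real (i + j) * \<beta>)
            * hyp2F1 (- r / 2) (r / 2 + real (i + j) * \<beta>) (1 - r / 2 + real (i + j) * \<beta>) (1 / 2))"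
    using final_integral(2)[OF assms(2,3,4,5,6,7)] by simp
  finally show ?thesis using int unfolding Y_def by simp
qed


end
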